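(* There is a universal constant $C>0$ such that the following holds. Let $\mu$ be an isotropic log-concave probability measure on $\mathbb{R}$, let $f:\mathbb{R}\to\mathbb{R}$ be a polynomial of degree $d$, and let $k\in\{1,\dots,d\}$ be an integer. Then for every $t\in\mathbb{R}\setminus\{0\}$, \[\left|\int_{\{x\in\mathbb{R}:|f^{(k)}(x)|\ge1\}}e^{\mathrm{i}tf(x)}\,d\mu(x)\right|\le C\,dk\,|t|^{-1/k}.\]
   Context: Isotropic: mean $0$, variance $1$; log-concave: density $e^{-\varphi}$ with $\varphi$ convex. $f^{(k)}$ denotes the $k$-th derivative of $f$. *)

theory Defs
  imports "HOL-Probability.Probability" "HOL-Computational_Algebra.Polynomial"
begin

text \<open>A log-concave measure on the real line: it has a density e^(-phi) with respect to
  Lebesgue measure, where phi is a convex function with values in (-infinity, +infinity];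
  we represent phi by a real-valued convex function on its (convex) effective domain S,
  the density being 0 outside S.\<close>
definition log_concave_measure :: "real measure \<Rightarrow> bool" where
  "log_concave_measure \<mu> \<longleftrightarrow>
     (\<exists>S \<phi>. convex S \<and> convex_on S \<phi> \<and>
        \<mu> = density lborel (\<lambda>x. ennreal (indicator S x * exp (- \<phi> x))))"

definition isotropic :: "real measure \<Rightarrow> bool" where
  "isotropic \<mu> \<longleftrightarrow> prob_space \<mu> \<and> sets \<mu> = sets borel \<and>
     integrable \<mu> (\<lambda>x. x) \<and> integrable \<mu> (\<lambda>x. x\<^sup>2) \<and>
     (\<integral>x. x \<partial>\<mu>) = 0 \<and> (\<integral>x. x\<^sup>2 \<partial>\<mu>) = 1"

end

theory Submission
  imports Defs "HOL-Real_Asymp.Real_Asymp"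
begin


definition fdiff :: "real \<Rightarrow> real poly \<Rightarrow> real poly" where
  "fdiff h g = pcompose g [:h,1:] - g"

lemma poly_fdiff: "poly (fdiff h g) x = poly g (x + h) - poly g x"
  by (simp add: fdiff_def poly_pcompose add.commute)

lemma pderiv_fdiff: "pderiv (fdiff h g) = fdiff h (pderiv g)"
  by (simp add: fdiff_def pderiv_diff pderiv_pcompose pderiv_pCons)

lemma pderiv_funpow_fdiff: "(pderiv ^^ n) (fdiff h g) = fdiff h ((pderiv ^^ n) g)"
  by (induction n) (auto simp: pderiv_fdiff)

lemma fdiff_bound:
  assumes "h \<ge> 0" "\<forall>x\<in>{a..a + real n * h}. \<bar>poly g x\<bar> \<le> L"
  shows "\<bar>poly ((fdiff h ^^ n) g) a\<bar> \<le> 2 ^ n * L"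
  using assms(2)
proof (induction n arbitrary: g L)
  case 0
  then show ?case using assms(1) by auto
next
  case (Suc n)
  have "\<forall>x\<in>{a..a + real n * h}. \<bar>poly (fdiff h g) x\<bar> \<le> 2 * L"
  proof
    fix x assume x: "x \<in> {a..a + real n * h}"
    have "x \<in> {a..a + real (Suc n) * h}" "x + h \<in> {a..a + real (Suc n) * h}"
      using x assms(1) by (auto simp: algebra_simps)
    then have "\<bar>poly g x\<bar> \<le> L" "\<bar>poly g (x+h)\<bar> \<le> L" using Suc.prems by auto
    then show "\<bar>poly (fdiff h g) x\<bar> \<le> 2 * L" by (simp add: poly_fdiff)
  qed
  from Suc.IH[OF this] show ?case
    by (simp add: funpow_Suc_right del: funpow.simps)
qed

lemma fdiff_mvt:
  assumes "h \<ge> 0"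
  shows "\<exists>\<xi>\<in>{a..a + real n * h}. poly ((fdiff h ^^ n) g) a = h ^ n * poly ((pderiv ^^ n) g) \<xi>"
proof (induction n arbitrary: g)
  case 0
  then show ?case by auto
next
  case (Suc n)
  obtain \<eta> where eta: "\<eta> \<in> {a..a + real n * h}"
    "poly ((fdiff h ^^ n) (fdiff h g)) a = h ^ n * poly ((pderiv ^^ n) (fdiff h g)) \<eta>"
    using Suc.IH[of "fdiff h g"] by blast
  define p where "p = (pderiv ^^ n) g"
  have e: "poly ((fdiff h ^^ Suc n) g) a = h ^ n * (poly p (\<eta> + h) - poly p \<eta>)"
    using eta(2) by (simp add: funpow_Suc_right pderiv_funpow_fdiff poly_fdiff p_def del: funpow.simps)
  show ?case
  proof (cases "h = 0")
    case True
    then show ?thesis using e eta(1) by (intro bexI[of _ \<eta>]) auto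
  next
    case False
    then have "\<eta> < \<eta> + h" using assms by auto
    from poly_MVT[OF this, of p] obtain \<xi> where xi: "\<eta> < \<xi>" "\<xi> < \<eta> + h"
      "poly p (\<eta> + h) - poly p \<eta> = h * poly (pderiv p) \<xi>" by auto
    have "\<xi> \<in> {a..a + real (Suc n) * h}" using xi eta(1) by (auto simp: algebra_simps)
    moreover have "pderiv p = (pderiv ^^ Suc n) g" by (simp add: p_def)
    ultimately show ?thesis using e xi(3) by (intro bexI[of _ \<xi>]) (auto simp: algebra_simps)
  qed
qed

lemma sublevel:
  assumes n: "n \<ge> 1" and ab: "a \<le> b"
    and g: "\<forall>x\<in>{a..b}. \<bar>poly g x\<bar> \<le> L"
    and d: "\<forall>x\<in>{a..b}. 1 \<le> \<bar>poly ((pderiv ^^ n) g) x\<bar>"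
  shows "((b - a) / real n) ^ n \<le> 2 ^ n * L"
proof -
  define h where "h = (b - a) / real n"
  have h0: "h \<ge> 0" using ab n by (simp add: h_def)
  have hend: "a + real n * h = b" using n by (simp add: h_def)
  obtain \<xi> where xi: "\<xi> \<in> {a..b}" "poly ((fdiff h ^^ n) g) a = h ^ n * poly ((pderiv ^^ n) g) \<xi>"
    using fdiff_mvt[OF h0, of a n g] hend by auto
  have "\<bar>poly ((fdiff h ^^ n) g) a\<bar> \<le> 2 ^ n * L"
    using fdiff_bound[OF h0, of a n g L] g hend by auto
  moreover have "h ^ n \<le> \<bar>h ^ n * poly ((pderiv ^^ n) g) \<xi>\<bar>"
  proof -
    have "h ^ n * 1 \<le> h ^ n * \<bar>poly ((pderiv ^^ n) g) \<xi>\<bar>"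
      using d xi(1) h0 by (intro mult_left_mono) auto
    then show ?thesis using h0 by (simp add: abs_mult)
  qed
  ultimately show ?thesis using xi(2) by (simp add: h_def)
qed



lemma vdc1:
  fixes f :: "real poly" and u v :: "real \<Rightarrow> real"
  assumes vd: "\<And>y. (v has_real_derivative u y) (at y)"
    and ub: "\<And>y. \<bar>u y\<bar> \<le> 1" and vb: "\<And>y. \<bar>v y\<bar> \<le> 1" and uc: "continuous_on UNIV u"
    and ce: "c \<le> e" and t: "t \<noteq> 0" and L: "L > 0"
    and gL: "\<forall>x\<in>{c..e}. L \<le> \<bar>poly (pderiv f) x\<bar>"
    and sgn: "(\<forall>x\<in>{c..e}. 0 \<le> poly (pderiv (pderiv f)) x) \<or> (\<forall>x\<in>{c..e}. poly (pderiv (pderiv f)) x \<le> 0)"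
  shows "\<bar>integral {c..e} (\<lambda>x. u (t * poly f x))\<bar> \<le> 4 / (\<bar>t\<bar> * L)"
proof -
  define g where "g = pderiv f"
  define g2 where "g2 = pderiv g"
  have gnz: "poly g x \<noteq> 0" if "x \<in> {c..e}" for x using gL L that unfolding g_def by force
  define G where "G x = v (t * poly f x) / (t * poly g x)" for x
  define w where "w x = v (t * poly f x) * poly g2 x / (t * (poly g x)^2)" for x
  have vc: "continuous_on UNIV v"
    using vd by (metis DERIV_isCont continuous_at_imp_continuous_on)
  have dG: "(G has_real_derivative (u (t * poly f x) - w x)) (at x)" if "x \<in> {c..e}" for x
  proof -
    have d1: "((\<lambda>x. v (t * poly f x)) has_real_derivative u (t * poly f x) * (t * poly g x)) (at x)"
      by (rule DERIV_chain2[OF vd]) (auto intro!: derivative_eq_intros simp: g_def)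
    have d2: "((\<lambda>x. t * poly g x) has_real_derivative t * poly g2 x) (at x)"
      by (auto intro!: derivative_eq_intros simp: g2_def)
    have "(G has_real_derivative ((u (t * poly f x) * (t * poly g x)) * (t * poly g x) - v (t * poly f x) * (t * poly g2 x)) / ((t * poly g x) * (t * poly g x))) (at x)"
      unfolding G_def using gnz[OF that] t by (intro DERIV_divide d1 d2) auto
    moreover have "((u (t * poly f x) * (t * poly g x)) * (t * poly g x) - v (t * poly f x) * (t * poly g2 x)) / ((t * poly g x) * (t * poly g x)) = u (t * poly f x) - w x"
      using gnz[OF that] t by (simp add: w_def field_simps power2_eq_square)
    ultimately show ?thesis by simp
  qed
  have I1: "((\<lambda>x. u (t * poly f x) - w x) has_integral (G e - G c)) {c..e}"
    using dG ce by (intro fundamental_theorem_of_calculus)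
      (auto simp: has_real_derivative_iff_has_vector_derivative[symmetric] intro: has_field_derivative_at_within)
  have wcont: "continuous_on {c..e} w"
    unfolding w_def using gnz t
    by (intro continuous_intros continuous_on_compose2[OF vc]) auto
  have wint: "w integrable_on {c..e}"
    using wcont by (rule integrable_continuous_interval)
  have uint: "(\<lambda>x. u (t * poly f x)) integrable_on {c..e}"
    by (intro integrable_continuous_interval continuous_intros continuous_on_compose2[OF uc]) auto
  have eq: "integral {c..e} (\<lambda>x. u (t * poly f x)) = (G e - G c) + integral {c..e} w"
  proof -
    have "integral {c..e} (\<lambda>x. u (t * poly f x) - w x) = G e - G c" using I1 by (rule integral_unique)
    moreover have "integral {c..e} (\<lambda>x. u (t * poly f x) - w x) = integral {c..e} (\<lambda>x. u (t * poly f x)) - integral {c..e} w"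
      by (rule integral_diff[OF uint wint])
    ultimately show ?thesis by simp
  qed
  have Gb: "\<bar>G x\<bar> \<le> 1 / (\<bar>t\<bar> * L)" if "x \<in> {c..e}" for x
  proof -
    have "\<bar>t\<bar> * L \<le> \<bar>t * poly g x\<bar>" using gL that t by (auto simp: abs_mult g_def intro: mult_left_mono)
    then have "\<bar>v (t * poly f x)\<bar> / \<bar>t * poly g x\<bar> \<le> 1 / (\<bar>t\<bar> * L)"
      using vb[of "t * poly f x"] t L by (intro frac_le) auto
    then show ?thesis by (simp add: G_def abs_divide)
  qed
  define s :: real where "s = (if (\<forall>x\<in>{c..e}. 0 \<le> poly g2 x) then 1 else -1)"
  have s_abs: "\<bar>poly g2 x\<bar> = s * poly g2 x" if "x \<in> {c..e}" for x
  proof (cases "\<forall>x\<in>{c..e}. 0 \<le> poly g2 x")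
    case True
    then show ?thesis using that by (simp add: s_def)
  next
    case False
    then have "\<forall>x\<in>{c..e}. poly g2 x \<le> 0" using sgn unfolding g2_def g_def by blast
    then have "poly g2 x \<le> 0" using that by blast
    moreover have "s = -1" using False unfolding s_def by argo
    ultimately show ?thesis by simp
  qed
  define H where "H x = - s / (\<bar>t\<bar> * poly g x)" for x
  have dH: "(H has_real_derivative (\<bar>poly g2 x\<bar> / (\<bar>t\<bar> * (poly g x)^2))) (at x)" if "x \<in> {c..e}" for x
  proof -
    have "(H has_real_derivative (s * (\<bar>t\<bar> * poly g2 x)) / ((\<bar>t\<bar> * poly g x) * (\<bar>t\<bar> * poly g x))) (at x)"
      unfolding H_def using gnz[OF that] t
      by (auto intro!: derivative_eq_intros simp: g2_def)
    moreover have "(s * (\<bar>t\<bar> * poly g2 x)) / ((\<bar>t\<bar> * poly g x) * (\<bar>t\<bar> * poly g x)) = \<bar>poly g2 x\<bar> / (\<bar>t\<bar> * (poly g x)^2)"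
      using gnz[OF that] t s_abs[OF that] by (simp add: field_simps power2_eq_square)
    ultimately show ?thesis by simp
  qed
  have I2: "((\<lambda>x. \<bar>poly g2 x\<bar> / (\<bar>t\<bar> * (poly g x)^2)) has_integral (H e - H c)) {c..e}"
    using dH ce by (intro fundamental_theorem_of_calculus)
      (auto simp: has_real_derivative_iff_has_vector_derivative[symmetric] intro: has_field_derivative_at_within)
  have Hb: "\<bar>H x\<bar> \<le> 1 / (\<bar>t\<bar> * L)" if "x \<in> {c..e}" for x
  proof -
    have "\<bar>t\<bar> * L \<le> \<bar>\<bar>t\<bar> * poly g x\<bar>" using gL that t by (auto simp: abs_mult g_def intro: mult_left_mono)
    then have "\<bar>s\<bar> / \<bar>\<bar>t\<bar> * poly g x\<bar> \<le> 1 / (\<bar>t\<bar> * L)"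
      using t L by (intro frac_le) (auto simp: s_def)
    then show ?thesis by (simp add: H_def abs_divide)
  qed
  have "\<bar>integral {c..e} w\<bar> \<le> integral {c..e} (\<lambda>x. \<bar>poly g2 x\<bar> / (\<bar>t\<bar> * (poly g x)^2))"
  proof -
    have "norm (integral {c..e} w) \<le> integral {c..e} (\<lambda>x. \<bar>poly g2 x\<bar> / (\<bar>t\<bar> * (poly g x)^2))"
    proof (rule integral_norm_bound_integral[OF wint])
      show "(\<lambda>x. \<bar>poly g2 x\<bar> / (\<bar>t\<bar> * (poly g x)^2)) integrable_on {c..e}" using I2 by blast
      fix x assume x: "x \<in> {c..e}"
      have "norm (w x) = \<bar>v (t * poly f x)\<bar> * \<bar>poly g2 x\<bar> / (\<bar>t\<bar> * (poly g x)^2)"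
        by (simp add: w_def abs_mult abs_divide power2_eq_square)
      also have "\<dots> \<le> 1 * \<bar>poly g2 x\<bar> / (\<bar>t\<bar> * (poly g x)^2)"
        using vb[of "t * poly f x"] by (intro divide_right_mono mult_right_mono) auto
      finally show "norm (w x) \<le> \<bar>poly g2 x\<bar> / (\<bar>t\<bar> * (poly g x)^2)" by simp
    qed
    then show ?thesis by simp
  qed
  also have "\<dots> = H e - H c" using I2 by (rule integral_unique)
  also have "\<dots> \<le> 2 / (\<bar>t\<bar> * L)"
  proof -
    have "e \<in> {c..e}" "c \<in> {c..e}" using ce by auto
    from abs_le_D1[OF Hb[OF this(1)]] abs_le_D2[OF Hb[OF this(2)]]
    have "H e - H c \<le> 1 / (\<bar>t\<bar> * L) + 1 / (\<bar>t\<bar> * L)" by linarith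
    also have "\<dots> = 2 / (\<bar>t\<bar> * L)" by (simp add: field_split_simps)
    finally show ?thesis .
  qed
  finally have wb: "\<bar>integral {c..e} w\<bar> \<le> 2 / (\<bar>t\<bar> * L)" .
  have "\<bar>integral {c..e} (\<lambda>x. u (t * poly f x))\<bar> \<le> \<bar>G e\<bar> + \<bar>G c\<bar> + \<bar>integral {c..e} w\<bar>"
    using eq by linarith
  also have "\<dots> \<le> 1 / (\<bar>t\<bar> * L) + 1 / (\<bar>t\<bar> * L) + 2 / (\<bar>t\<bar> * L)"
    using Gb[of e] Gb[of c] wb ce by (intro add_mono) auto
  also have "\<dots> = 4 / (\<bar>t\<bar> * L)" by (simp add: field_split_simps)
  finally show ?thesis .
qed



lemma cells:
  fixes F :: "real \<Rightarrow> real \<Rightarrow> real" and B :: real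
  assumes fin: "finite Z" and B: "B \<ge> 0"
    and add: "\<And>x y z. a \<le> x \<Longrightarrow> x \<le> y \<Longrightarrow> y \<le> z \<Longrightarrow> z \<le> b \<Longrightarrow> F x z = F x y + F y z"
    and cell: "\<And>x y. a \<le> x \<Longrightarrow> x < y \<Longrightarrow> y \<le> b \<Longrightarrow> {x<..<y} \<inter> Z = {} \<Longrightarrow> \<bar>F x y\<bar> \<le> B"
  shows "a \<le> x \<Longrightarrow> x \<le> y \<Longrightarrow> y \<le> b \<Longrightarrow> \<bar>F x y\<bar> \<le> (card (Z \<inter> {x<..<y}) + 1) * B"
proof (induction "card (Z \<inter> {x<..<y})" arbitrary: x y rule: less_induct)
  case (less x y)
  show ?case
  proof (cases "Z \<inter> {x<..<y} = {}")
    case True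
    show ?thesis
    proof (cases "x = y")
      case True
      have "F x x = F x x + F x x" using add[of x x x] less.prems by auto
      then show ?thesis using True B by simp
    next
      case False
      then have "\<bar>F x y\<bar> \<le> B" using cell[of x y] less.prems True by (auto simp: inf_commute)
      then show ?thesis using \<open>Z \<inter> {x<..<y} = {}\<close> by simp
    qed
  next
    case False
    then obtain z where z: "z \<in> Z" "x < z" "z < y" by auto
    have s1: "Z \<inter> {x<..<z} \<subseteq> Z \<inter> {x<..<y} - {z}" "Z \<inter> {z<..<y} \<subseteq> Z \<inter> {x<..<y} - {z}"
      using z by auto
    have disj: "(Z \<inter> {x<..<z}) \<inter> (Z \<inter> {z<..<y}) = {}" by auto
    have "(Z \<inter> {x<..<z}) \<union> (Z \<inter> {z<..<y}) \<subseteq> Z \<inter> {x<..<y} - {z}" using s1 by auto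
    then have "card ((Z \<inter> {x<..<z}) \<union> (Z \<inter> {z<..<y})) \<le> card (Z \<inter> {x<..<y} - {z})"
      using fin by (intro card_mono) auto
    also have "\<dots> = card (Z \<inter> {x<..<y}) - 1" using z fin by simp
    finally have cs: "card (Z \<inter> {x<..<z}) + card (Z \<inter> {z<..<y}) \<le> card (Z \<inter> {x<..<y}) - 1"
      using card_Un_disjoint[OF _ _ disj] fin by simp
    have pos: "card (Z \<inter> {x<..<y}) \<ge> 1" using z fin by (metis False card_0_eq finite_Int less_one not_le)
    have IH1: "\<bar>F x z\<bar> \<le> (card (Z \<inter> {x<..<z}) + 1) * B"
      using less.hyps[of x z] cs pos less.prems z by auto
    have IH2: "\<bar>F z y\<bar> \<le> (card (Z \<inter> {z<..<y}) + 1) * B"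
      using less.hyps[of z y] cs pos less.prems z by auto
    have "F x y = F x z + F z y" using add[of x z y] less.prems z by auto
    then have "\<bar>F x y\<bar> \<le> (card (Z \<inter> {x<..<z}) + 1) * B + (card (Z \<inter> {z<..<y}) + 1) * B"
      using IH1 IH2 by linarith
    also have "\<dots> = real (card (Z \<inter> {x<..<z}) + card (Z \<inter> {z<..<y}) + 2) * B" by (simp add: algebra_simps)
    also have "\<dots> \<le> real (card (Z \<inter> {x<..<y}) + 1) * B"
      using cs pos B by (intro mult_right_mono) auto
    finally show ?thesis by simp
  qed
qed

definition rootsof :: "real poly list \<Rightarrow> real set" where
  "rootsof P = (\<Union>p\<in>{p\<in>set P. p \<noteq> 0}. {x. poly p x = 0})"

lemma rootsof_finite: "finite (rootsof P)"
  unfolding rootsof_def by (auto intro: poly_roots_finite)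

lemma rootsof_card: "card (rootsof P) \<le> (\<Sum>p\<leftarrow>P. degree p)"
proof (induction P)
  case Nil
  then show ?case by (simp add: rootsof_def)
next
  case (Cons p P)
  have e: "rootsof (p # P) = (if p = 0 then {} else {x. poly p x = 0}) \<union> rootsof P"
    by (auto simp: rootsof_def)
  have "card (rootsof (p # P)) \<le> card (if p = 0 then {} else {x. poly p x = 0}) + card (rootsof P)"
    unfolding e by (rule card_Un_le)
  also have "card (if p = 0 then {} else {x. poly p x = 0}) \<le> degree p"
    by (auto intro: card_poly_roots_bound)
  finally show ?case using Cons by simp
qed

lemma rootsof_mem: "p \<in> set P \<Longrightarrow> p \<noteq> 0 \<Longrightarrow> poly p x = 0 \<Longrightarrow> x \<in> rootsof P"
  by (auto simp: rootsof_def)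



lemma abs_dichotomy:
  fixes q :: "real poly" and c :: real
  assumes "q - [:c:] \<in> set P" "q + [:c:] \<in> set P" "{x<..<y} \<inter> rootsof P = {}" "c > 0"
  shows "(\<forall>z\<in>{x<..<y}. c \<le> \<bar>poly q z\<bar>) \<or> (\<forall>z\<in>{x<..<y}. \<bar>poly q z\<bar> < c)"
proof (rule ccontr)
  assume "\<not> ?thesis"
  then obtain z1 z2 where z: "z1 \<in> {x<..<y}" "z2 \<in> {x<..<y}" "c \<le> \<bar>poly q z1\<bar>" "\<bar>poly q z2\<bar> < c"
    by (auto simp: not_le)
  have cont: "continuous_on S (\<lambda>z. \<bar>poly q z\<bar>)" for S by (intro continuous_intros)
  obtain w where w: "w \<in> {x<..<y}" "\<bar>poly q w\<bar> = c"
  proof (cases "z1 \<le> z2")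
    case True
    from IVT2'[of "\<lambda>z. \<bar>poly q z\<bar>" z2 c z1, OF _ _ True cont] z obtain w where "z1 \<le> w" "w \<le> z2" "\<bar>poly q w\<bar> = c" by auto
    then show ?thesis using z by (intro that[of w]) auto
  next
    case False
    from IVT'[of "\<lambda>z. \<bar>poly q z\<bar>" z2 c z1, OF _ _ _ cont] z False obtain w where "z2 \<le> w" "w \<le> z1" "\<bar>poly q w\<bar> = c" by auto
    then show ?thesis using z by (intro that[of w]) auto
  qed
  have n1: "q - [:c:] \<noteq> 0"
  proof
    assume "q - [:c:] = 0"
    then have "poly (q - [:c:]) z2 = 0" by simp
    then show False using z(4) by simp
  qed
  have n2: "q + [:c:] \<noteq> 0"
  proof
    assume "q + [:c:] = 0"
    then have "poly (q + [:c:]) z2 = 0" by simp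
    then show False using z(4) by simp
  qed
  have "poly (q - [:c:]) w = 0 \<or> poly (q + [:c:]) w = 0" using w(2) by (auto simp: abs_if split: if_splits)
  then have "w \<in> rootsof P" using rootsof_mem[OF assms(1) n1] rootsof_mem[OF assms(2) n2] by blast
  then show False using w(1) assms(3) by blast
qed

lemma sign_dichotomy:
  fixes q :: "real poly"
  assumes "q \<in> set P" "{x<..<y} \<inter> rootsof P = {}"
  shows "(\<forall>z\<in>{x<..<y}. 0 \<le> poly q z) \<or> (\<forall>z\<in>{x<..<y}. poly q z \<le> 0)"
proof (rule ccontr)
  assume "\<not> ?thesis"
  then obtain z1 z2 where z: "z1 \<in> {x<..<y}" "z2 \<in> {x<..<y}" "poly q z1 < 0" "0 < poly q z2"
    by (auto simp: not_le)
  have cont: "continuous_on S (\<lambda>z. poly q z)" for S by (intro continuous_intros)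
  obtain w where w: "w \<in> {x<..<y}" "poly q w = 0"
  proof (cases "z1 \<le> z2")
    case True
    from IVT'[of "poly q" z1 0 z2, OF _ _ True cont] z obtain w where "z1 \<le> w" "w \<le> z2" "poly q w = 0" by auto
    then show ?thesis using z by (intro that[of w]) auto
  next
    case False
    then have "z2 \<le> z1" by simp
    from IVT2'[of "poly q" z1 0 z2, OF _ _ this cont] z obtain w where "z2 \<le> w" "w \<le> z1" "poly q w = 0" by auto
    then show ?thesis using z by (intro that[of w]) auto
  qed
  have "q \<noteq> 0" using z by auto
  then have "w \<in> rootsof P" using rootsof_mem[OF assms(1)] w by blast
  then show False using w(1) assms(2) by blast
qed

lemma ext_le:
  fixes h :: "real \<Rightarrow> real"
  assumes "continuous_on UNIV h" "x < y" "\<forall>z\<in>{x<..<y}. h z \<le> c" "z \<in> {x..y}"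
  shows "h z \<le> c"
proof -
  have "closed {z. h z \<le> c}" using assms(1) by (intro closed_Collect_le continuous_intros) auto
  moreover have "{x<..<y} \<subseteq> {z. h z \<le> c}" using assms(3) by auto
  ultimately have "closure {x<..<y} \<subseteq> {z. h z \<le> c}" by (rule closure_minimal[rotated])
  then show ?thesis using assms(2,4) by auto
qed

lemma bint:
  fixes h :: "real \<Rightarrow> real"
  assumes "S \<in> sets borel" "S \<subseteq> {a..b}" "h \<in> borel_measurable borel" "\<And>x. \<bar>h x\<bar> \<le> 1"
  shows "set_integrable lborel S h"
  unfolding set_integrable_def
proof (rule Bochner_Integration.integrable_bound)
  have "emeasure lborel S \<le> emeasure lborel {a..b}" using assms(1,2) by (intro emeasure_mono) auto
  then have "emeasure lborel S < \<infinity>" by (auto simp: emeasure_lborel_Icc_eq less_top[symmetric] top_unique)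
  then show "integrable lborel (indicator S :: real \<Rightarrow> real)" using assms(1) by (intro integrable_real_indicator) auto
  show "(\<lambda>x. indicator S x *\<^sub>R h x) \<in> borel_measurable lborel" using assms(1,3) by measurable
  show "AE x in lborel. norm (indicator S x *\<^sub>R h x) \<le> norm (indicator S x :: real)"
    using assms(4) by (auto simp: indicator_def)
qed



lemma degree_funpow_pderiv: "degree ((pderiv ^^ k) f) \<le> degree f" for f :: "real poly"
proof (induction k)
  case (Suc k)
  have "degree (pderiv ((pderiv ^^ k) f)) \<le> degree ((pderiv ^^ k) f)" by (simp add: degree_pderiv)
  then show ?case using Suc by simp
qed simp

lemma funpow_pderiv_shift: "(pderiv ^^ (k - 1)) (pderiv f) = (pderiv ^^ k) f" if "k \<ge> 1"
proof -
  obtain n where "k = Suc n" using \<open>k \<ge> 1\<close> by (cases k) auto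
  then show ?thesis by (simp add: funpow_Suc_right del: funpow.simps)
qed

lemma unweighted:
  fixes f :: "real poly" and u v :: "real \<Rightarrow> real"
  assumes vd: "\<And>y. (v has_real_derivative u y) (at y)"
    and ub: "\<And>y. \<bar>u y\<bar> \<le> 1" and vb: "\<And>y. \<bar>v y\<bar> \<le> 1" and uc: "continuous_on UNIV u"
    and t: "t \<noteq> 0" and k: "1 \<le> k" and kd: "k \<le> degree f" and ab: "a \<le> b"
  shows "\<bar>LINT x:({x. 1 \<le> \<bar>poly ((pderiv ^^ k) f) x\<bar>} \<inter> {a..b})|lborel. u (t * poly f x)\<bar>
           \<le> 24 * real (degree f) * real k * \<bar>t\<bar> powr (- 1 / real k)"
proof -
  define d where "d = degree f"
  define fk where "fk = (pderiv ^^ k) f"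
  define g where "g = pderiv f"
  define lam where "lam = \<bar>t\<bar> powr (- (real k - 1) / real k)"
  define T where "T = \<bar>t\<bar> powr (- 1 / real k)"
  define Bc where "Bc = 4 * real k * T"
  define P where "P = [fk - [:1:], fk + [:1:], g - [:lam:], g + [:lam:], pderiv g]"
  define Z where "Z = rootsof P"
  define A where "A = {x. 1 \<le> \<bar>poly fk x\<bar>}"
  define h where "h x = u (t * poly f x)" for x
  define F where "F x y = (LINT z:(A \<inter> {x..y})|lborel. h z)" for x y
  have lam0: "lam > 0" using t by (simp add: lam_def)
  have T0: "T > 0" using t by (simp add: T_def)
  have Bc0: "Bc \<ge> 0" using T0 by (simp add: Bc_def)
  have hcont: "continuous_on UNIV h"
    unfolding h_def by (intro continuous_on_compose2[OF uc] continuous_intros) auto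
  have hmeas[measurable]: "h \<in> borel_measurable borel" using hcont by (rule borel_measurable_continuous_onI)
  have hb: "\<bar>h x\<bar> \<le> 1" for x using ub by (simp add: h_def)
  have Ameas[measurable]: "A \<in> sets borel"
    unfolding A_def by (intro borel_closed closed_Collect_le continuous_intros)
  have Fint: "set_integrable lborel (A \<inter> {x..y}) h" for x y
    by (rule bint[OF _ _ hmeas hb]) auto
  have add: "F x z = F x y + F y z" if "x \<le> y" "y \<le> z" for x y z
  proof -
    have "A \<inter> {x..z} = (A \<inter> {x..y}) \<union> (A \<inter> {y..z})" using that by auto
    moreover have "AE w in lborel. \<not> (w \<in> A \<inter> {x..y} \<and> w \<in> A \<inter> {y..z})"
      using AE_lborel_singleton[of y] by eventually_elim auto
    ultimately show ?thesis unfolding F_def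
      by (simp only:) (rule set_integral_Un_AE[OF _ _ _ Fint Fint]; simp)
  qed
  have powA: "4 / (\<bar>t\<bar> * lam) = 4 * T"
  proof -
    have "\<bar>t\<bar> * lam = \<bar>t\<bar> powr 1 * lam" using t by simp
    also have "\<dots> = \<bar>t\<bar> powr (1 / real k)" unfolding lam_def using k
      by (subst powr_add[symmetric]) (simp add: field_simps)
    finally show ?thesis using t by (simp add: T_def powr_minus_divide)
  qed
  have cellb: "\<bar>F x y\<bar> \<le> Bc" if xy: "a \<le> x" "x < y" "y \<le> b" "{x<..<y} \<inter> Z = {}" for x y
  proof -
    have noZ: "{x<..<y} \<inter> rootsof P = {}" using xy by (simp add: Z_def)
    from abs_dichotomy[of fk 1 P x y] noZ
    have D1: "(\<forall>z\<in>{x<..<y}. 1 \<le> \<bar>poly fk z\<bar>) \<or> (\<forall>z\<in>{x<..<y}. \<bar>poly fk z\<bar> < 1)"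
      by (simp add: P_def)
    show ?thesis
    proof (cases "\<forall>z\<in>{x<..<y}. \<bar>poly fk z\<bar> < 1")
      case True
      have "F x y = (LINT z:{}|lborel. h z)"
        unfolding F_def
      proof (rule set_integral_cong_set)
        show "AE w in lborel. (w \<in> {}) = (w \<in> A \<inter> {x..y})"
          using AE_lborel_singleton[of x] AE_lborel_singleton[of y]
        proof eventually_elim
          case (elim w)
          then show ?case using True by (auto simp: A_def not_le)
        qed
      qed (unfold set_borel_measurable_def; measurable)+
      then show ?thesis using Bc0 by (simp add: set_lebesgue_integral_def)
    next
      case False
      then have allA: "\<forall>z\<in>{x<..<y}. 1 \<le> \<bar>poly fk z\<bar>" using D1 by blast
      have "F x y = (LINT z:{x..y}|lborel. h z)"
        unfolding F_def
      proof (rule set_integral_cong_set)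
        show "AE w in lborel. (w \<in> {x..y}) = (w \<in> A \<inter> {x..y})"
          using AE_lborel_singleton[of x] AE_lborel_singleton[of y]
        proof eventually_elim
          case (elim w)
          then show ?case using allA by (auto simp: A_def)
        qed
      qed (unfold set_borel_measurable_def; measurable)+
      also have "\<dots> = integral {x..y} h"
        by (rule set_borel_integral_eq_integral(2)[OF bint[OF _ _ hmeas hb]]) auto
      finally have Feq: "F x y = integral {x..y} h" .
      have fkc: "\<forall>z\<in>{x..y}. 1 \<le> \<bar>poly fk z\<bar>"
      proof
        fix z assume z: "z \<in> {x..y}"
        have "(\<lambda>z. - \<bar>poly fk z\<bar>) z \<le> -1"
          by (rule ext_le[OF _ xy(2) _ z]) (use allA in \<open>auto intro!: continuous_intros\<close>)
        then show "1 \<le> \<bar>poly fk z\<bar>" by simp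
      qed
      from abs_dichotomy[of g lam P x y] noZ lam0
      have D2: "(\<forall>z\<in>{x<..<y}. lam \<le> \<bar>poly g z\<bar>) \<or> (\<forall>z\<in>{x<..<y}. \<bar>poly g z\<bar> < lam)"
        by (simp add: P_def)
      show ?thesis
      proof (cases "\<forall>z\<in>{x<..<y}. \<bar>poly g z\<bar> < lam")
        case True
        show ?thesis
        proof (cases "k = 1")
          case True
          have "(x + y) / 2 \<in> {x<..<y}" using xy by auto
          moreover have "fk = g" "lam = 1" using True t by (simp_all add: fk_def g_def lam_def)
          ultimately have False using allA \<open>\<forall>z\<in>{x<..<y}. \<bar>poly g z\<bar> < lam\<close>
            by (metis not_less)
          then show ?thesis ..
        next
          case False
          define n where "n = k - 1"
          have n1: "n \<ge> 1" using False k by (simp add: n_def)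
          have gl: "\<forall>z\<in>{x..y}. \<bar>poly g z\<bar> \<le> lam"
          proof
            fix z assume z: "z \<in> {x..y}"
            show "\<bar>poly g z\<bar> \<le> lam"
              by (rule ext_le[OF _ xy(2) _ z, where h = "\<lambda>z. \<bar>poly g z\<bar>"])
                 (use True in \<open>auto intro!: continuous_intros less_imp_le\<close>)
          qed
          have gd: "(pderiv ^^ n) g = fk" unfolding n_def g_def fk_def using k by (rule funpow_pderiv_shift)
          have sl: "((y - x) / real n) ^ n \<le> 2 ^ n * lam"
            by (rule sublevel[OF n1 _ gl]) (use xy fkc gd in auto)
          define c where "c = (y - x) / real n"
          have c0: "c > 0" using xy n1 by (simp add: c_def)
          have "c = (c ^ n) powr (1 / real n)"
            using c0 n1 by (simp add: powr_realpow[symmetric] powr_powr)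
          also have "\<dots> \<le> (2 ^ n * lam) powr (1 / real n)"
            using sl c0 by (intro powr_mono2) (auto simp: c_def)
          also have "\<dots> = 2 * lam powr (1 / real n)"
            using lam0 n1 by (simp add: powr_mult powr_realpow[symmetric] powr_powr)
          also have "lam powr (1 / real n) = T"
          proof -
            have kk: "real k - 1 \<noteq> 0" "real k \<noteq> 0" using n1 k by (auto simp: n_def)
            have "(1 - real k) / (real k * (real k - 1)) = - (1 / real k)"
              using kk by (simp add: field_simps)
            then show ?thesis
              unfolding lam_def T_def using n1 k by (simp add: powr_powr n_def of_nat_diff)
          qed
          finally have "c \<le> 2 * T" .
          then have yx: "y - x \<le> 2 * real n * T" using n1 by (simp add: c_def field_simps)
          have "\<bar>integral {x..y} h\<bar> \<le> integral {x..y} (\<lambda>_. 1::real)"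
          proof -
            have "norm (integral {x..y} h) \<le> integral {x..y} (\<lambda>_. 1::real)"
              by (rule integral_norm_bound_integral)
                 (use hb hcont in \<open>auto intro!: integrable_continuous_interval continuous_on_subset[OF hcont]\<close>)
            then show ?thesis by simp
          qed
          also have "\<dots> = y - x" using xy by (simp add: content_real)
          also have "\<dots> \<le> Bc"
          proof -
            have "real n \<le> 2 * real k" by (simp add: n_def)
            then have "2 * real n * T \<le> 2 * (2 * real k) * T" using T0 by (intro mult_right_mono) auto
            then show ?thesis using yx unfolding Bc_def by (simp add: algebra_simps)
          qed
          finally show ?thesis using Feq by simp
        qed
      next
        case False
        then have gL: "\<forall>z\<in>{x<..<y}. lam \<le> \<bar>poly g z\<bar>" using D2 by blast
        have gLc: "\<forall>z\<in>{x..y}. lam \<le> \<bar>poly (pderiv f) z\<bar>"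
        proof
          fix z assume z: "z \<in> {x..y}"
          have "(\<lambda>z. - \<bar>poly g z\<bar>) z \<le> - lam"
            by (rule ext_le[OF _ xy(2) _ z]) (use gL in \<open>auto intro!: continuous_intros\<close>)
          then show "lam \<le> \<bar>poly (pderiv f) z\<bar>" by (simp add: g_def)
        qed
        from sign_dichotomy[of "pderiv g" P x y] noZ
        have S: "(\<forall>z\<in>{x<..<y}. 0 \<le> poly (pderiv g) z) \<or> (\<forall>z\<in>{x<..<y}. poly (pderiv g) z \<le> 0)"
          by (simp add: P_def)
        have Sc: "(\<forall>z\<in>{x..y}. 0 \<le> poly (pderiv (pderiv f)) z) \<or> (\<forall>z\<in>{x..y}. poly (pderiv (pderiv f)) z \<le> 0)"
        proof (cases "\<forall>z\<in>{x<..<y}. 0 \<le> poly (pderiv g) z")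
          case True
          have "\<forall>z\<in>{x..y}. 0 \<le> poly (pderiv (pderiv f)) z"
          proof
            fix z assume z: "z \<in> {x..y}"
            have "(\<lambda>z. - poly (pderiv g) z) z \<le> 0"
              by (rule ext_le[OF _ xy(2) _ z]) (use True in \<open>auto intro!: continuous_intros\<close>)
            then show "0 \<le> poly (pderiv (pderiv f)) z" by (simp add: g_def)
          qed
          then show ?thesis by blast
        next
          case False
          then have F2: "\<forall>z\<in>{x<..<y}. poly (pderiv g) z \<le> 0" using S by blast
          have "\<forall>z\<in>{x..y}. poly (pderiv (pderiv f)) z \<le> 0"
          proof
            fix z assume z: "z \<in> {x..y}"
            have "(\<lambda>z. poly (pderiv g) z) z \<le> 0"
              by (rule ext_le[OF _ xy(2) _ z]) (use F2 in \<open>auto intro!: continuous_intros\<close>)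
            then show "poly (pderiv (pderiv f)) z \<le> 0" by (simp add: g_def)
          qed
          then show ?thesis by blast
        qed
        have "\<bar>integral {x..y} h\<bar> \<le> 4 / (\<bar>t\<bar> * lam)"
          unfolding h_def by (rule vdc1[OF vd ub vb uc _ t lam0 gLc Sc]) (use xy in auto)
        also have "\<dots> = 4 * T" by (rule powA)
        also have "\<dots> \<le> Bc" using T0 k by (simp add: Bc_def)
        finally show ?thesis using Feq by simp
      qed
    qed
  qed
  have main: "\<bar>F a b\<bar> \<le> (card (Z \<inter> {a<..<b}) + 1) * Bc"
    by (rule cells[of Z Bc a b F, OF _ Bc0 add cellb]) (use ab in \<open>auto simp: Z_def rootsof_finite\<close>)
  have degs: "(\<Sum>p\<leftarrow>P. degree p) \<le> 5 * d"
  proof -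
    have dfk: "degree fk \<le> d" unfolding fk_def d_def by (rule degree_funpow_pderiv)
    have dg: "degree g \<le> d" by (simp add: g_def d_def degree_pderiv)
    have "degree (fk - [:1:]) \<le> d" "degree (fk + [:1:]) \<le> d" "degree (g - [:lam:]) \<le> d"
      "degree (g + [:lam:]) \<le> d" "degree (pderiv g) \<le> d"
      using dfk dg by (auto intro!: degree_diff_le degree_add_le simp: degree_pderiv)
    then show ?thesis by (simp add: P_def)
  qed
  have "card (Z \<inter> {a<..<b}) \<le> card Z" by (intro card_mono) (auto simp: Z_def rootsof_finite)
  also have "\<dots> \<le> 5 * d" using rootsof_card[of P] degs by (simp add: Z_def)
  finally have cZ: "card (Z \<inter> {a<..<b}) \<le> 5 * d" .
  have d1: "d \<ge> 1" using k kd by (simp add: d_def)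
  have "(card (Z \<inter> {a<..<b}) + 1) * Bc \<le> real (6 * d) * Bc"
    using cZ d1 Bc0 by (intro mult_right_mono) auto
  also have "\<dots> = 24 * real d * real k * T" by (simp add: Bc_def)
  finally show ?thesis using main by (simp add: F_def A_def fk_def h_def d_def T_def)
qed



lemma convex_noninterior:
  fixes S :: "real set"
  assumes "convex S" "x \<in> S" "x \<notin> interior S"
  shows "x = Inf S \<or> x = Sup S"
proof -
  have iv: "is_interval S" using assms(1) by (simp add: is_interval_convex_1)
  have "(\<forall>y\<in>S. x \<le> y) \<or> (\<forall>y\<in>S. y \<le> x)"
  proof (rule ccontr)
    assume "\<not> ?thesis"
    then obtain y z where yz: "y \<in> S" "z \<in> S" "y < x" "x < z" by (auto simp: not_le)
    have "{y<..<z} \<subseteq> S"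
    proof
      fix w assume "w \<in> {y<..<z}"
      then have "y \<le> w" "w \<le> z" by auto
      then show "w \<in> S" using iv[unfolded is_interval_1, rule_format, of y z w] yz by blast
    qed
    then have "{y<..<z} \<subseteq> interior S" by (rule interior_maximal) simp
    then have "x \<in> interior S" using yz by auto
    then show False using assms(3) by simp
  qed
  then show ?thesis
  proof
    assume "\<forall>y\<in>S. x \<le> y"
    then have "Inf S = x" using assms(2) by (intro cInf_eq_minimum) auto
    then show ?thesis by simp
  next
    assume "\<forall>y\<in>S. y \<le> x"
    then have "Sup S = x" using assms(2) by (intro cSup_eq_maximum) auto
    then show ?thesis by simp
  qed
qed

lemma rho_meas:
  fixes S :: "real set" and \<phi> :: "real \<Rightarrow> real"
  assumes "convex S" "convex_on S \<phi>"
  shows "(\<lambda>x. indicator S x * exp (- \<phi> x)) \<in> borel_measurable borel"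
proof -
  define T where "T = interior S"
  define E where "E = S - T"
  have "open T" by (simp add: T_def)
  have "convex_on T \<phi>" using assms(2) by (rule convex_on_subset) (simp_all add: T_def interior_subset convex_interior assms(1))
  then have "continuous_on T \<phi>" using \<open>open T\<close> by (rule convex_on_continuous[rotated])
  then have "continuous_on T (\<lambda>x. exp (- \<phi> x))" by (intro continuous_intros)
  then have m1: "(\<lambda>x. indicator T x *\<^sub>R exp (- \<phi> x)) \<in> borel_measurable borel"
    using \<open>open T\<close> by (intro borel_measurable_continuous_on_indicator) auto
  have "E \<subseteq> {Inf S, Sup S}" using convex_noninterior[OF assms(1)] by (auto simp: E_def T_def)
  then have finE: "finite E" by (rule finite_subset) auto
  have m2: "(\<lambda>x. \<Sum>p\<in>E. exp (- \<phi> p) * indicator {p} x) \<in> borel_measurable borel" by measurable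
  have eq: "indicator S x * exp (- \<phi> x) = indicator T x *\<^sub>R exp (- \<phi> x) + (\<Sum>p\<in>E. exp (- \<phi> p) * indicator {p} x)" for x
  proof -
    have s: "(\<Sum>p\<in>E. exp (- \<phi> p) * indicator {p} x) = (if x \<in> E then exp (- \<phi> x) else 0)"
    proof -
      have "(\<Sum>p\<in>E. exp (- \<phi> p) * indicator {p} x) = (\<Sum>p\<in>E. if p = x then exp (- \<phi> p) else 0)"
        by (intro sum.cong) (auto simp: indicator_def)
      also have "\<dots> = (if x \<in> E then exp (- \<phi> x) else 0)" using finE by (simp add: sum.delta)
      finally show ?thesis .
    qed
    have "T \<subseteq> S" by (simp add: T_def interior_subset)
    then show ?thesis unfolding s by (auto simp: E_def indicator_def)
  qed
  show ?thesis unfolding eq using m1 m2 by measurable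
qed

lemma level_convex:
  fixes S :: "real set" and \<phi> :: "real \<Rightarrow> real"
  assumes "convex S" "convex_on S \<phi>"
  shows "convex {x. s < indicator S x * exp (- \<phi> x)}"
proof (cases "s < 0")
  case True
  have "s < indicator S x * exp (- \<phi> x)" for x
  proof -
    have "0 \<le> indicator S x * exp (- \<phi> x)" by simp
    then show ?thesis using True by linarith
  qed
  then have "{x. s < indicator S x * exp (- \<phi> x)} = UNIV" by auto
  then show ?thesis by simp
next
  case False
  then have eq: "{x. s < indicator S x * exp (- \<phi> x)} = {x\<in>S. s < exp (- \<phi> x)}" by (auto simp: indicator_def)
  show ?thesis unfolding eq
  proof (rule convexI)
    fix x y :: real and a b :: real
    assume x: "x \<in> {x \<in> S. s < exp (- \<phi> x)}" and y: "y \<in> {x \<in> S. s < exp (- \<phi> x)}"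
      and ab: "0 \<le> a" "0 \<le> b" "a + b = 1"
    have xS: "x \<in> S" and yS: "y \<in> S" using x y by auto
    have inS: "a *\<^sub>R x + b *\<^sub>R y \<in> S" by (rule convexD[OF assms(1) xS yS ab])
    have a1: "a = 1 - b" using ab(3) by simp
    have "\<phi> (a *\<^sub>R x + b *\<^sub>R y) \<le> a * \<phi> x + b * \<phi> y"
      unfolding a1 by (rule convex_onD[OF assms(2)]) (use ab a1 xS yS in auto)
    also have "\<dots> \<le> a * max (\<phi> x) (\<phi> y) + b * max (\<phi> x) (\<phi> y)"
      using ab by (intro add_mono mult_left_mono) auto
    also have "\<dots> = max (\<phi> x) (\<phi> y)" using ab by (simp add: distrib_right[symmetric])
    finally have pm: "\<phi> (a *\<^sub>R x + b *\<^sub>R y) \<le> max (\<phi> x) (\<phi> y)" .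
    have "exp (- max (\<phi> x) (\<phi> y)) \<le> exp (- \<phi> (a *\<^sub>R x + b *\<^sub>R y))" using pm by simp
    moreover have "s < exp (- max (\<phi> x) (\<phi> y))" using x y by (auto simp: max_def)
    ultimately have "s < exp (- \<phi> (a *\<^sub>R x + b *\<^sub>R y))" by (rule less_le_trans[rotated])
    then show "a *\<^sub>R x + b *\<^sub>R y \<in> {x \<in> S. s < exp (- \<phi> x)}" using inS by auto
  qed
qed

lemma convex_finite_bounded:
  fixes J :: "real set"
  assumes "convex J" "J \<in> sets borel" "emeasure lborel J < \<infinity>"
  shows "bdd_above J" "bdd_below J"
proof -
  have iv: "is_interval J" using assms(1) by (simp add: is_interval_convex_1)
  obtain B where B: "emeasure lborel J = ennreal B" "B \<ge> 0" using assms(3) by (cases "emeasure lborel J" rule: ennreal_cases) auto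
  show "bdd_above J"
  proof (rule ccontr)
    assume nb: "\<not> bdd_above J"
    then obtain x where x: "x \<in> J" unfolding bdd_above_def by auto
    have "\<forall>M. \<exists>z\<in>J. M < z" using nb unfolding bdd_above_def by (auto simp: not_le)
    then obtain z where z: "z \<in> J" "z > x + B + 1" by blast
    have "{x..z} \<subseteq> J" using iv[unfolded is_interval_1, rule_format, of x z] x z by auto
    then have "emeasure lborel {x..z} \<le> emeasure lborel J" using assms(2) by (intro emeasure_mono) auto
    then have "ennreal (z - x) \<le> ennreal B" using B z by simp
    then have "z - x \<le> B" using B(2) by (simp add: ennreal_le_iff)
    then show False using z by simp
  qed
  show "bdd_below J"
  proof (rule ccontr)
    assume nb: "\<not> bdd_below J"
    then obtain x where x: "x \<in> J" unfolding bdd_below_def by auto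
    have "\<forall>M. \<exists>z\<in>J. z < M" using nb unfolding bdd_below_def by (auto simp: not_le)
    then obtain z where z: "z \<in> J" "z < x - B - 1" by blast
    have "{z..x} \<subseteq> J" using iv[unfolded is_interval_1, rule_format, of z x] x z by auto
    then have "emeasure lborel {z..x} \<le> emeasure lborel J" using assms(2) by (intro emeasure_mono) auto
    then have "ennreal (x - z) \<le> ennreal B" using B z by simp
    then have "x - z \<le> B" using B(2) by (simp add: ennreal_le_iff)
    then show False using z by simp
  qed
qed

lemma convex_bounded_between:
  fixes J :: "real set"
  assumes "convex J" "bdd_above J" "bdd_below J" "J \<noteq> {}"
  shows "J \<subseteq> {Inf J..Sup J}" "{Inf J<..<Sup J} \<subseteq> J"
proof -
  show "J \<subseteq> {Inf J..Sup J}" using assms by (auto intro: cInf_lower cSup_upper)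
  have iv: "is_interval J" using assms(1) by (simp add: is_interval_convex_1)
  show "{Inf J<..<Sup J} \<subseteq> J"
  proof
    fix z assume z: "z \<in> {Inf J<..<Sup J}"
    have "\<exists>x\<in>J. x < z" using z cInf_less_iff[OF assms(4,3)] by auto
    then obtain x where x: "x \<in> J" "x < z" by blast
    have "\<exists>y\<in>J. z < y" using z less_cSup_iff[OF assms(4,2)] by auto
    then obtain y where y: "y \<in> J" "z < y" by blast
    show "z \<in> J" using iv[unfolded is_interval_1, rule_format, of x y z] x y by auto
  qed
qed



lemma exp_neg_bound:
  fixes r :: real assumes r: "r > 0" shows "exp (- r) \<le> 256 / r ^ 4"
proof -
  have "(1 + r / real 4) ^ 4 \<le> exp r" using r by (intro exp_ge_one_plus_x_over_n_power_n) auto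
  moreover have "(r / 4) ^ 4 \<le> (1 + r / real 4) ^ 4" using r by (intro power_mono) auto
  ultimately have "r ^ 4 / 256 \<le> exp r" by (simp add: power_divide)
  then have "1 / exp r \<le> 1 / (r ^ 4 / 256)" using r by (intro divide_left_mono) auto
  then show ?thesis by (simp add: exp_minus field_simps)
qed

lemma markov_level:
  fixes \<rho> :: "real \<Rightarrow> real"
  assumes [measurable]: "\<rho> \<in> borel_measurable borel" and tot: "(\<integral>\<^sup>+x. ennreal (\<rho> x) \<partial>lborel) = 1"
    and s: "s > 0"
  shows "emeasure lborel {z. s < \<rho> z} \<le> ennreal (1 / s)"
proof -
  have "ennreal s * emeasure lborel {z. s < \<rho> z} = (\<integral>\<^sup>+x. ennreal s * indicator {z. s < \<rho> z} x \<partial>lborel)"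
    by (rule nn_integral_cmult_indicator[symmetric]) measurable
  also have "\<dots> \<le> (\<integral>\<^sup>+x. ennreal (\<rho> x) \<partial>lborel)"
    by (intro nn_integral_mono) (auto simp: indicator_def intro: ennreal_leI)
  finally have "ennreal s * emeasure lborel {z. s < \<rho> z} \<le> 1" using tot by simp
  then have "ennreal (1/s) * (ennreal s * emeasure lborel {z. s < \<rho> z}) \<le> ennreal (1/s) * 1"
    by (intro mult_left_mono) auto
  also have "ennreal (1/s) * (ennreal s * emeasure lborel {z. s < \<rho> z}) = emeasure lborel {z. s < \<rho> z}"
    using s by (simp add: mult.assoc[symmetric] ennreal_mult[symmetric])
  finally show ?thesis by simp
qed

lemma sup_bound:
  fixes S :: "real set" and \<phi> :: "real \<Rightarrow> real" and \<mu> :: "real measure"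
  assumes conv: "convex S" "convex_on S \<phi>"
    and mu: "\<mu> = density lborel (\<lambda>x. ennreal (indicator S x * exp (- \<phi> x)))"
    and iso: "isotropic \<mu>"
  shows "indicator S x0 * exp (- \<phi> x0) \<le> 400"
proof -
  define \<rho> where "\<rho> x = indicator S x * exp (- \<phi> x)" for x
  have \<rho>m[measurable]: "\<rho> \<in> borel_measurable borel" unfolding \<rho>_def by (rule rho_meas[OF conv])
  have \<rho>0: "0 \<le> \<rho> x" for x by (simp add: \<rho>_def)
  have mu': "\<mu> = density lborel (\<lambda>x. ennreal (\<rho> x))" using mu by (simp add: \<rho>_def)
  have ps: "prob_space \<mu>" and i1: "integrable \<mu> (\<lambda>x. x)" and i2: "integrable \<mu> (\<lambda>x. x\<^sup>2)"
    and m1: "(\<integral>x. x \<partial>\<mu>) = 0" and m2: "(\<integral>x. x\<^sup>2 \<partial>\<mu>) = 1"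
    using iso by (auto simp: isotropic_def)
  interpret prob_space \<mu> by (rule ps)
  have sp: "space \<mu> = UNIV" by (simp add: mu')
  have tot: "(\<integral>\<^sup>+x. ennreal (\<rho> x) \<partial>lborel) = 1"
  proof -
    have "emeasure \<mu> UNIV = 1" using emeasure_space_1 sp by simp
    moreover have "emeasure \<mu> UNIV = (\<integral>\<^sup>+x. ennreal (\<rho> x) * indicator UNIV x \<partial>lborel)"
      unfolding mu' by (rule emeasure_density) auto
    ultimately show ?thesis by simp
  qed
  show ?thesis
  proof (cases "\<rho> x0 = 0")
    case True
    then show ?thesis by (simp add: \<rho>_def)
  next
    case False
    then have x0S: "x0 \<in> S" by (auto simp: \<rho>_def indicator_def split: if_splits)
    define m where "m = exp (- \<phi> x0)"
    have m0: "m > 0" by (simp add: m_def)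
    have \<rho>x0: "\<rho> x0 = m" using x0S by (simp add: \<rho>_def m_def)
    define l where "l = exp 1 / m"
    have l0: "l > 0" using m0 by (simp add: l_def)
    have mom: "(\<integral>\<^sup>+x. ennreal (\<rho> x) * ennreal ((x - x0)^2) \<partial>lborel) = ennreal (1 + x0^2)"
    proof -
      have ic: "integrable \<mu> (\<lambda>x. x0^2)" by simp
      have iq: "integrable \<mu> (\<lambda>x. (x - x0)^2)"
      proof -
        have "(\<lambda>x. (x - x0)^2) = (\<lambda>x. x\<^sup>2 - 2 * x0 * x + x0^2)" by (auto simp: power2_eq_square algebra_simps)
        then show ?thesis using i1 i2 ic by simp
      qed
      have "(\<integral>x. (x - x0)^2 \<partial>\<mu>) = (\<integral>x. x\<^sup>2 - 2 * x0 * x + x0^2 \<partial>\<mu>)"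
        by (rule Bochner_Integration.integral_cong) (auto simp: power2_eq_square algebra_simps)
      also have "\<dots> = (\<integral>x. x\<^sup>2 \<partial>\<mu>) - 2 * x0 * (\<integral>x. x \<partial>\<mu>) + x0^2"
        using i1 i2 ic by (simp add: prob_space)
      also have "\<dots> = 1 + x0^2" using m1 m2 by simp
      finally have "(\<integral>\<^sup>+ x. ennreal ((x - x0)^2) \<partial>\<mu>) = ennreal (1 + x0^2)"
        using nn_integral_eq_integral[OF iq] by simp
      moreover have "(\<integral>\<^sup>+ x. ennreal ((x - x0)^2) \<partial>\<mu>) = (\<integral>\<^sup>+x. ennreal (\<rho> x) * ennreal ((x - x0)^2) \<partial>lborel)"
        unfolding mu' by (rule nn_integral_density) auto
      ultimately show ?thesis by simp
    qed
    have claim1: "\<bar>x - x0\<bar> \<le> r * l" if xS: "x \<in> S" and r1: "r \<ge> 1" and lt: "\<phi> x < \<phi> x0 + r" for x r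
    proof -
      define s where "s = m / exp 1"
      have s0: "s > 0" using m0 by (simp add: s_def)
      define y where "y = (1 - 1/r) * x0 + (1/r) * x"
      have "\<phi> y \<le> (1 - 1/r) * \<phi> x0 + (1/r) * \<phi> x"
        unfolding y_def using convex_onD[OF conv(2), of "1/r" x0 x] r1 x0S xS by simp
      also have "\<dots> = \<phi> x0 + (1/r) * (\<phi> x - \<phi> x0)" by (simp add: algebra_simps)
      also have "\<dots> < \<phi> x0 + 1"
      proof -
        have "(1/r) * (\<phi> x - \<phi> x0) < (1/r) * r" using lt r1 by (intro mult_strict_left_mono) auto
        then show ?thesis using r1 by simp
      qed
      finally have py: "\<phi> y < \<phi> x0 + 1" .
      have yS: "y \<in> S" unfolding y_def using convexD[OF conv(1) x0S xS, of "1 - 1/r" "1/r"] r1 by simp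
      have Ly: "y \<in> {z. s < \<rho> z}"
        using yS py by (simp add: \<rho>_def s_def m_def exp_diff[symmetric] exp_minus_inverse)
      have Lx0: "x0 \<in> {z. s < \<rho> z}" using \<rho>x0 m0 by (simp add: s_def divide_less_eq)
      have cL: "convex {z. s < \<rho> z}" unfolding \<rho>_def by (rule level_convex[OF conv])
      have "closed_segment x0 y \<subseteq> {z. s < \<rho> z}" by (rule closed_segment_subset[OF Lx0 Ly cL])
      then have "emeasure lborel (closed_segment x0 y) \<le> emeasure lborel {z. s < \<rho> z}"
        by (intro emeasure_mono) auto
      also have "\<dots> \<le> ennreal (1 / s)" by (rule markov_level[OF \<rho>m tot s0])
      finally have "ennreal \<bar>y - x0\<bar> \<le> ennreal (1 / s)"
        by (auto simp: closed_segment_eq_real_ivl split: if_splits)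
      then have "\<bar>y - x0\<bar> \<le> 1 / s" using s0 by (simp add: ennreal_le_iff)
      moreover have "\<bar>y - x0\<bar> = \<bar>x - x0\<bar> / r" using r1 by (simp add: y_def algebra_simps abs_divide) (simp add: field_simps)
      ultimately have "\<bar>x - x0\<bar> / r \<le> l" by (simp add: s_def l_def)
      then show ?thesis using r1 by (simp add: field_simps)
    qed
    define K where "K = 4096 * m * l^4"
    define c where "c = 2 * l"
    have K0: "K > 0" using m0 l0 by (simp add: K_def)
    have c0: "c > 0" using l0 by (simp add: c_def)
    have claim2: "\<rho> x \<le> K / (x - x0)^4" if far: "c \<le> \<bar>x - x0\<bar>" for x
    proof (cases "x \<in> S")
      case False
      then show ?thesis using K0 by (simp add: \<rho>_def)
    next
      case True
      define r where "r = \<bar>x - x0\<bar> / (2 * l)"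
      have r1: "r \<ge> 1" using far l0 by (simp add: r_def c_def)
      have dpos: "\<bar>x - x0\<bar> > 0" using far c0 by linarith
      have ge: "\<phi> x0 + r \<le> \<phi> x"
      proof (rule ccontr)
        assume "\<not> ?thesis"
        then have "\<bar>x - x0\<bar> \<le> r * l" using claim1[OF True r1] by simp
        also have "r * l = \<bar>x - x0\<bar> / 2" using l0 by (simp add: r_def)
        finally show False using dpos by simp
      qed
      have "\<rho> x = exp (- \<phi> x)" using True by (simp add: \<rho>_def)
      also have "\<dots> \<le> exp (- \<phi> x0 + (- r))" using ge by simp
      also have "\<dots> = m * exp (- r)" unfolding m_def by (rule exp_add)
      also have "\<dots> \<le> m * (256 / r ^ 4)" using r1 m0 by (intro mult_left_mono exp_neg_bound) auto
      also have "\<dots> = K / (x - x0)^4"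
      proof -
        have e4: "(x - x0)^4 = \<bar>x - x0\<bar>^4" by (simp add: power_even_abs)
        have r4: "r ^ 4 = \<bar>x - x0\<bar>^4 / (16 * l^4)" by (simp add: r_def power_divide power_mult_distrib)
        have "m * (256 / r ^ 4) = m * (256 * (16 * l^4) / \<bar>x - x0\<bar>^4)" unfolding r4 by simp
        also have "\<dots> = K / \<bar>x - x0\<bar>^4" by (simp add: K_def)
        finally show ?thesis unfolding e4 .
      qed
      finally show ?thesis .
    qed
    define g where "g x = ennreal (K / (x - x0)^2)" for x
    have gm[measurable]: "g \<in> borel_measurable borel" unfolding g_def by measurable
    have pw: "ennreal (\<rho> x) * ennreal ((x - x0)^2) \<le> ennreal (4 * l^2) * ennreal (\<rho> x) + (g x * indicator {x0 + c..} x + g x * indicator {..x0 - c} x)" for x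
    proof (cases "\<bar>x - x0\<bar> < c")
      case True
      have "(x - x0)^2 \<le> c^2" using True by (metis abs_le_square_iff less_imp_le abs_of_pos c0)
      then have "\<rho> x * (x - x0)^2 \<le> (4 * l^2) * \<rho> x" using \<rho>0[of x] by (simp add: c_def power_mult_distrib mult.commute mult_left_mono)
      then have "ennreal (\<rho> x) * ennreal ((x - x0)^2) \<le> ennreal (4 * l^2) * ennreal (\<rho> x)"
        using \<rho>0[of x] l0 by (simp add: ennreal_mult[symmetric] ennreal_leI)
      then show ?thesis by (rule add_increasing2[rotated]) simp
    next
      case False
      then have far: "c \<le> \<bar>x - x0\<bar>" by simp
      have "x - x0 \<noteq> 0" using far c0 by auto
      then have dpos: "(x - x0)^2 > 0" by simp
      have "\<rho> x * (x - x0)^2 \<le> K / (x - x0)^4 * (x - x0)^2"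
        using claim2[OF far] dpos by (intro mult_right_mono) auto
      also have "\<dots> = K / (x - x0)^2"
      proof -
        have "(x - x0)^4 = (x - x0)^2 * (x - x0)^2" by (simp add: power_add[symmetric])
        then show ?thesis using dpos by (simp only:) (simp add: field_simps)
      qed
      finally have "ennreal (\<rho> x) * ennreal ((x - x0)^2) \<le> g x"
        using \<rho>0[of x] by (simp add: g_def ennreal_mult[symmetric] ennreal_leI)
      also have "g x \<le> g x * indicator {x0 + c..} x + g x * indicator {..x0 - c} x"
        using far by (cases "x0 \<le> x") (auto simp: indicator_def)
      finally show ?thesis by (rule add_increasing[rotated]) simp
    qed
    have IR: "(\<integral>\<^sup>+x. g x * indicator {x0 + c..} x \<partial>lborel) = ennreal (K / c)"
    proof -
      have "(\<integral>\<^sup>+x. ennreal (K / (x - x0)^2) * indicator {x0 + c..} x \<partial>lborel) = ennreal (0 - (- K / (x0 + c - x0)))"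
      proof (rule nn_integral_FTC_atLeast)
        show "(\<lambda>x. K / (x - x0)^2) \<in> borel_measurable borel" by measurable
        fix x assume x: "x0 + c \<le> x"
        then have "x - x0 \<noteq> 0" using c0 by simp
        then show "((\<lambda>x. - K / (x - x0)) has_real_derivative K / (x - x0)^2) (at x)"
          by (auto intro!: derivative_eq_intros simp: power2_eq_square field_simps)
        show "0 \<le> K / (x - x0)^2" using K0 by simp
      next
        show "((\<lambda>x. - K / (x - x0)) \<longlongrightarrow> 0) at_top" by real_asymp
      qed
      then show ?thesis by (simp add: g_def)
    qed
    have IL: "(\<integral>\<^sup>+x. g x * indicator {..x0 - c} x \<partial>lborel) = ennreal (K / c)"
    proof -
      have "(\<integral>\<^sup>+x. g x * indicator {..x0 - c} x \<partial>lborel) = ennreal \<bar>-1\<bar> * (\<integral>\<^sup>+x. g (2 * x0 + (-1) * x) * indicator {..x0 - c} (2 * x0 + (-1) * x) \<partial>lborel)"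
        by (rule nn_integral_real_affine[where f = "\<lambda>x. g x * indicator {..x0 - c} x"]) auto
      also have "\<dots> = (\<integral>\<^sup>+x. g (2 * x0 + (-1) * x) * indicator {..x0 - c} (2 * x0 + (-1) * x) \<partial>lborel)"
        by simp
      also have "\<dots> = (\<integral>\<^sup>+x. g x * indicator {x0 + c..} x \<partial>lborel)"
      proof (intro nn_integral_cong)
        fix x
        have "(2 * x0 + (-1) * x - x0)^2 = (x - x0)^2" by (simp add: power2_eq_square algebra_simps)
        moreover have "(2 * x0 + (-1) * x \<le> x0 - c) = (x0 + c \<le> x)" by auto
        ultimately show "g (2 * x0 + (-1) * x) * indicator {..x0 - c} (2 * x0 + (-1) * x) = g x * indicator {x0 + c..} x"
          by (simp add: g_def indicator_def)
      qed
      finally show ?thesis using IR by simp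
    qed
    have "ennreal (1 + x0^2) \<le> (\<integral>\<^sup>+x. ennreal (4 * l^2) * ennreal (\<rho> x) + (g x * indicator {x0 + c..} x + g x * indicator {..x0 - c} x) \<partial>lborel)"
      unfolding mom[symmetric] by (intro nn_integral_mono pw)
    also have "\<dots> = ennreal (4 * l^2) * 1 + (ennreal (K / c) + ennreal (K / c))"
      by (simp add: nn_integral_add nn_integral_cmult tot IR IL)
    also have "\<dots> = ennreal (4 * l^2 + (K / c + K / c))" using K0 c0 by (simp del: ennreal_plus add: ennreal_plus[symmetric])
    finally have E: "ennreal (1 + x0^2) \<le> ennreal (4 * l^2 + (K / c + K / c))" .
    have "0 \<le> 4 * l^2 + (K / c + K / c)" using K0 c0 by simp
    from ennreal_le_iff[OF this] E have "1 + x0^2 \<le> 4 * l^2 + (K / c + K / c)" by blast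
    moreover have "K / c + K / c = 2 * K / c" by simp
    ultimately have A1: "1 \<le> 4 * l^2 + 2 * K / c" using zero_le_power2[of x0] by linarith
    have e1: "2 * K / c = 4096 * m * l^3"
    proof -
      have "l^4 = l^3 * l" by (simp add: eval_nat_numeral)
      then show ?thesis using l0 by (simp add: K_def c_def)
    qed
    have e2: "m * l^3 = exp 1 ^ 3 / m^2"
    proof -
      have "m^3 = m^2 * m" by (simp add: eval_nat_numeral)
      then show ?thesis using m0 by (simp add: l_def power_divide)
    qed
    have e3: "l^2 = exp 1 ^ 2 / m^2" by (simp add: l_def power_divide)
    have "4 * l^2 + 2 * K / c = (4 * exp 1 ^ 2 + 4096 * exp 1 ^ 3) / m^2"
      unfolding e1 e3 using e2 by (simp add: add_divide_distrib)
    with A1 have m2: "m^2 \<le> 4 * exp 1 ^ 2 + 4096 * exp 1 ^ 3" using m0 by (simp add: le_divide_eq)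
    have ea: "exp 1 ^ 2 \<le> (3::real) ^ 2" by (rule power_mono[OF exp_le]) simp
    have eb: "exp 1 ^ 3 \<le> (3::real) ^ 3" by (rule power_mono[OF exp_le]) simp
    have "m^2 \<le> 400^2" using m2 ea eb by simp
    then have "m \<le> 400" by (rule power2_le_imp_le) simp
    then show ?thesis using \<rho>x0 by (simp add: \<rho>_def)
  qed
qed



lemma weighted:
  fixes u v :: "real \<Rightarrow> real" and f :: "real poly" and S :: "real set" and \<phi> :: "real \<Rightarrow> real"
    and \<mu> :: "real measure"
  assumes vd: "\<And>y. (v has_real_derivative u y) (at y)"
    and ub: "\<And>y. \<bar>u y\<bar> \<le> 1" and vb: "\<And>y. \<bar>v y\<bar> \<le> 1" and uc: "continuous_on UNIV u"
    and conv: "convex S" "convex_on S \<phi>"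
    and mu: "\<mu> = density lborel (\<lambda>x. ennreal (indicator S x * exp (- \<phi> x)))"
    and iso: "isotropic \<mu>"
    and t: "t \<noteq> 0" and k: "1 \<le> k" and kd: "k \<le> degree f"
  shows "\<bar>LINT x:{x. 1 \<le> \<bar>poly ((pderiv ^^ k) f) x\<bar>}|\<mu>. u (t * poly f x)\<bar>
           \<le> 400 * (24 * real (degree f) * real k * \<bar>t\<bar> powr (- 1 / real k))"
proof -
  define \<rho> where "\<rho> x = indicator S x * exp (- \<phi> x)" for x
  define A where "A = {x. 1 \<le> \<bar>poly ((pderiv ^^ k) f) x\<bar>}"
  define h where "h x = indicator A x * u (t * poly f x)" for x
  define B where "B = 24 * real (degree f) * real k * \<bar>t\<bar> powr (- 1 / real k)"
  have B0: "B \<ge> 0" by (simp add: B_def)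
  have \<rho>m[measurable]: "\<rho> \<in> borel_measurable borel" unfolding \<rho>_def by (rule rho_meas[OF conv])
  have \<rho>0: "0 \<le> \<rho> x" for x by (simp add: \<rho>_def)
  have \<rho>400: "\<rho> x \<le> 400" for x unfolding \<rho>_def by (rule sup_bound[OF conv mu iso])
  have mu': "\<mu> = density lborel (\<lambda>x. ennreal (\<rho> x))" using mu by (simp add: \<rho>_def)
  have ps: "prob_space \<mu>" using iso by (simp add: isotropic_def)
  have tot: "(\<integral>\<^sup>+x. ennreal (\<rho> x) \<partial>lborel) = 1"
  proof -
    interpret prob_space \<mu> by (rule ps)
    have "emeasure \<mu> UNIV = 1" using emeasure_space_1 by (simp add: mu')
    moreover have "emeasure \<mu> UNIV = (\<integral>\<^sup>+x. ennreal (\<rho> x) * indicator UNIV x \<partial>lborel)"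
      unfolding mu' by (rule emeasure_density) auto
    ultimately show ?thesis by simp
  qed
  have \<rho>int: "integrable lborel \<rho>"
    by (rule integrableI_nonneg) (use tot \<rho>0 in auto)
  have ucont: "continuous_on UNIV (\<lambda>x. u (t * poly f x))"
    by (intro continuous_on_compose2[OF uc] continuous_intros) auto
  have um[measurable]: "(\<lambda>x. u (t * poly f x)) \<in> borel_measurable borel"
    using ucont by (rule borel_measurable_continuous_onI)
  have Am[measurable]: "A \<in> sets borel"
    unfolding A_def by (intro borel_closed closed_Collect_le continuous_intros)
  have hm[measurable]: "h \<in> borel_measurable borel" unfolding h_def by measurable
  have hb: "\<bar>h x\<bar> \<le> 1" for x using ub[of "t * poly f x"] by (auto simp: h_def indicator_def)
  have step1: "(LINT x:A|\<mu>. u (t * poly f x)) = (LINT x|lborel. \<rho> x * h x)"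
    unfolding set_lebesgue_integral_def mu'
    by (subst integral_density) (auto simp: h_def \<rho>_def)
  define \<Phi> where "\<Phi> x s = (if 0 < s \<and> s < \<rho> x then h x else 0)" for x s :: real
  have \<Phi>m[measurable]: "case_prod \<Phi> \<in> borel_measurable (lborel \<Otimes>\<^sub>M lborel)"
  proof -
    have "case_prod \<Phi> = (\<lambda>p. if 0 < snd p \<and> snd p < \<rho> (fst p) then h (fst p) else 0)"
      by (auto simp: \<Phi>_def fun_eq_iff)
    also have "\<dots> \<in> borel_measurable (lborel \<Otimes>\<^sub>M lborel)" by measurable
    finally show ?thesis .
  qed
  have \<Phi>ind: "\<Phi> x = (\<lambda>s. indicator {0<..<\<rho> x} s * h x)" for x
    by (auto simp: \<Phi>_def fun_eq_iff indicator_def)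
  have iind: "integrable lborel (indicator {0<..<\<rho> x} :: real \<Rightarrow> real)" for x
    using \<rho>0[of x] by (intro integrable_real_indicator) auto
  have inner: "(LINT s|lborel. \<Phi> x s) = \<rho> x * h x" for x
    unfolding \<Phi>ind using \<rho>0[of x] by simp
  have innorm: "(LINT s|lborel. norm (\<Phi> x s)) = \<rho> x * \<bar>h x\<bar>" for x
  proof -
    have "(\<lambda>s. norm (\<Phi> x s)) = (\<lambda>s. indicator {0<..<\<rho> x} s * \<bar>h x\<bar>)"
      by (auto simp: \<Phi>_def fun_eq_iff indicator_def)
    then show ?thesis using \<rho>0[of x] by simp
  qed
  have \<Phi>int: "integrable (lborel \<Otimes>\<^sub>M lborel) (case_prod \<Phi>)"
  proof (rule lborel_pair.Fubini_integrable[OF \<Phi>m])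
    show "integrable lborel (\<lambda>x. LINT y|lborel. norm (case_prod \<Phi> (x, y)))"
    proof (rule Bochner_Integration.integrable_bound[OF \<rho>int])
      show "(\<lambda>x. LINT y|lborel. norm (case_prod \<Phi> (x, y))) \<in> borel_measurable lborel"
        using innorm by simp
      show "AE x in lborel. norm (LINT y|lborel. norm (case_prod \<Phi> (x, y))) \<le> norm (\<rho> x)"
      proof (rule AE_I2)
        fix x
        have "\<rho> x * \<bar>h x\<bar> \<le> \<rho> x * 1" using \<rho>0[of x] hb[of x] by (intro mult_left_mono) auto
        then show "norm (LINT y|lborel. norm (case_prod \<Phi> (x, y))) \<le> norm (\<rho> x)"
          using innorm[of x] \<rho>0[of x] hb[of x] by simp
      qed
    qed
    show "AE x in lborel. integrable lborel (\<lambda>y. case_prod \<Phi> (x, y))"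
      unfolding \<Phi>ind using iind by simp
  qed
  have fub: "(LINT s|lborel. LINT x|lborel. \<Phi> x s) = (LINT x|lborel. LINT s|lborel. \<Phi> x s)"
    by (rule lborel_pair.Fubini_integral[OF \<Phi>int])
  define G where "G s = (LINT x|lborel. \<Phi> x s)" for s
  have Gint: "integrable lborel G" unfolding G_def by (rule lborel_pair.integrable_snd[OF \<Phi>int])
  have step2: "(LINT x|lborel. \<rho> x * h x) = (LINT s|lborel. G s)"
    using fub by (simp add: G_def inner)
  have Gb: "\<bar>G s\<bar> \<le> B * indicator {0<..<400} s" for s
  proof (cases "0 < s \<and> s < 400")
    case False
    then have "\<Phi> x s = 0" for x using \<rho>400[of x] by (auto simp: \<Phi>_def)
    then have "G s = 0" by (simp add: G_def)
    then show ?thesis using B0 by simp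
  next
    case True
    define J where "J = {x. s < \<rho> x}"
    have Jm[measurable]: "J \<in> sets borel" unfolding J_def by measurable
    have GJ: "G s = (LINT x:(A \<inter> J)|lborel. u (t * poly f x))"
      unfolding G_def set_lebesgue_integral_def
      by (intro Bochner_Integration.integral_cong) (use True in \<open>auto simp: \<Phi>_def J_def h_def indicator_def\<close>)
    show ?thesis
    proof (cases "J = {}")
      case True
      then show ?thesis using GJ B0 by (simp add: set_lebesgue_integral_def)
    next
      case False
      have cJ: "convex J" unfolding J_def \<rho>_def by (rule level_convex[OF conv])
      have "emeasure lborel J \<le> ennreal (1 / s)" unfolding J_def by (rule markov_level[OF \<rho>m tot]) (use True in simp)
      then have fJ: "emeasure lborel J < \<infinity>" by (simp add: le_less_trans)
      have bA: "bdd_above J" and bB: "bdd_below J" using convex_finite_bounded[OF cJ Jm fJ] by auto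
      define a where "a = Inf J"
      define b where "b = Sup J"
      have J1: "J \<subseteq> {a..b}" and J2: "{a<..<b} \<subseteq> J"
        using convex_bounded_between[OF cJ bA bB False] by (auto simp: a_def b_def)
      have ab: "a \<le> b" using J1 False by auto
      have "(LINT x:(A \<inter> J)|lborel. u (t * poly f x)) = (LINT x:(A \<inter> {a..b})|lborel. u (t * poly f x))"
      proof (rule set_integral_cong_set)
        show "AE x in lborel. (x \<in> A \<inter> {a..b}) = (x \<in> A \<inter> J)"
          using AE_lborel_singleton[of a] AE_lborel_singleton[of b]
        proof eventually_elim
          case (elim x)
          then show ?case using J1 J2 by auto
        qed
      qed (unfold set_borel_measurable_def; measurable)+
      then have "\<bar>G s\<bar> \<le> B"
        using GJ unweighted[OF vd ub vb uc t k kd ab] by (simp add: A_def B_def)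
      then show ?thesis using True by simp
    qed
  qed
  have bint: "integrable lborel (\<lambda>s. B * indicator {0<..<400::real} s)"
    by (intro integrable_mult_right integrable_real_indicator) auto
  have "\<bar>LINT s|lborel. G s\<bar> \<le> (LINT s|lborel. B * indicator {0<..<400::real} s)"
    by (rule integral_abs_bound_integral[OF Gint bint Gb])
  also have "\<dots> = B * 400" by simp
  finally show ?thesis using step1 step2 by (simp add: A_def B_def)
qed



theorem lemma5p1:
  shows "\<exists>C>0. \<forall>(\<mu>::real measure) (f::real poly) (k::nat) (t::real).
     isotropic \<mu> \<and> log_concave_measure \<mu> \<and> 1 \<le> k \<and> k \<le> degree f \<and> t \<noteq> 0 \<longrightarrow>
     cmod (LINT x:{x. \<bar>poly ((pderiv ^^ k) f) x\<bar> \<ge> 1}|\<mu>. cis (t * poly f x))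
       \<le> C * real (degree f) * real k * \<bar>t\<bar> powr (- 1 / real k)"
proof (intro exI[of _ 19200] conjI allI impI)
  fix \<mu> :: "real measure" and f :: "real poly" and k :: nat and t :: real
  assume H: "isotropic \<mu> \<and> log_concave_measure \<mu> \<and> 1 \<le> k \<and> k \<le> degree f \<and> t \<noteq> 0"
  then have iso: "isotropic \<mu>" and lc: "log_concave_measure \<mu>" and k: "1 \<le> k" and kd: "k \<le> degree f"
    and t: "t \<noteq> 0" by auto
  obtain S \<phi> where conv: "convex S" "convex_on S \<phi>"
    and mu: "\<mu> = density lborel (\<lambda>x. ennreal (indicator S x * exp (- \<phi> x)))"
    using lc unfolding log_concave_measure_def by blast
  define A where "A = {x. \<bar>poly ((pderiv ^^ k) f) x\<bar> \<ge> 1}"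
  define B where "B = 24 * real (degree f) * real k * \<bar>t\<bar> powr (- 1 / real k)"
  have A': "A = {x. 1 \<le> \<bar>poly ((pderiv ^^ k) f) x\<bar>}" by (simp add: A_def)
  have ps: "prob_space \<mu>" using iso by (simp add: isotropic_def)
  interpret prob_space \<mu> by (rule ps)
  have Am[measurable]: "A \<in> sets borel"
    unfolding A_def by (intro borel_closed closed_Collect_le continuous_intros)
  have pm[measurable]: "(\<lambda>x. poly f x) \<in> borel_measurable borel"
    by (rule borel_measurable_continuous_onI) (intro continuous_intros)
  have cm[measurable]: "(\<lambda>x. cis (t * poly f x)) \<in> borel_measurable borel"
    by (rule borel_measurable_continuous_onI) (intro continuous_intros)
  have integ: "integrable \<mu> (\<lambda>x. indicator A x *\<^sub>R cis (t * poly f x))"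
  proof (rule integrable_const_bound[where B = 1])
    show "AE x in \<mu>. norm (indicator A x *\<^sub>R cis (t * poly f x)) \<le> 1"
      by (auto simp: indicator_def)
    show "(\<lambda>x. indicator A x *\<^sub>R cis (t * poly f x)) \<in> borel_measurable \<mu>"
      unfolding mu by measurable
  qed
  have re: "Re (LINT x:A|\<mu>. cis (t * poly f x)) = (LINT x:A|\<mu>. cos (t * poly f x))"
    unfolding set_lebesgue_integral_def using integ
    by (subst integral_Re[symmetric]) (auto simp: indicator_def intro!: Bochner_Integration.integral_cong)
  have im: "Im (LINT x:A|\<mu>. cis (t * poly f x)) = (LINT x:A|\<mu>. sin (t * poly f x))"
    unfolding set_lebesgue_integral_def using integ
    by (subst integral_Im[symmetric]) (auto simp: indicator_def intro!: Bochner_Integration.integral_cong)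
  have c1: "\<bar>LINT x:A|\<mu>. cos (t * poly f x)\<bar> \<le> 400 * B"
    unfolding A' B_def
    by (rule weighted[OF _ _ _ _ conv mu iso t k kd, where v = sin])
       (auto intro!: derivative_eq_intros continuous_intros)
  have c2: "\<bar>LINT x:A|\<mu>. sin (t * poly f x)\<bar> \<le> 400 * B"
    unfolding A' B_def
    by (rule weighted[OF _ _ _ _ conv mu iso t k kd, where v = "\<lambda>x. - cos x"])
       (auto intro!: derivative_eq_intros continuous_intros)
  have "cmod (LINT x:A|\<mu>. cis (t * poly f x)) \<le> \<bar>Re (LINT x:A|\<mu>. cis (t * poly f x))\<bar> + \<bar>Im (LINT x:A|\<mu>. cis (t * poly f x))\<bar>"
    by (rule cmod_le)
  also have "\<dots> \<le> 400 * B + 400 * B" using c1 c2 re im by simp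
  also have "\<dots> = 19200 * real (degree f) * real k * \<bar>t\<bar> powr (- 1 / real k)"
    by (simp add: B_def)
  finally show "cmod (LINT x:{x. \<bar>poly ((pderiv ^^ k) f) x\<bar> \<ge> 1}|\<mu>. cis (t * poly f x))
       \<le> 19200 * real (degree f) * real k * \<bar>t\<bar> powr (- 1 / real k)"
    by (simp add: A_def)
qed simp

end
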